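(* Let $H$ be a graph with vertices $a_1,\dots,a_k$ ($k\ge2$) and at least one edge, let $y^*$ be an optimal solution of the fractional independent-set LP of $H$, and let $f^*=(a_i,a_j)\in E(H)$ be an edge with $y^*_{a_i}+y^*_{a_j}=1$. Let $m$ be such that the quantities $m^{y^*_{a_\ell}}$ are integers. Let $G_0$ be the edge-colored graph whose vertex set is partitioned into $V_1,\dots,V_k$ with $|V_\ell|=m^{y^*_{a_\ell}}$, in which for every edge $(a_\ell,a_{\ell'})\in E(H)$ all vertices of $V_\ell$ are joined to all vertices of $V_{\ell'}$, and all edges have color $0$. Let $\mathcal{G}_0$ be the distribution supported on $G_0$, and let $\mathcal{G}_1$ be the distribution of the graph obtained from $G_0$ by choosing one edge $e^*$ uniformly at random among the edges between $V_i$ and $V_j$ and changing its color to $1$. Let $\mathcal{G}=\frac12\mathcal{G}_0+\frac12\mathcal{G}_1$. Then any algorithm that, given $G\sim\mathcal{G}$, determines with probability at least $2/3$ whether $G$ belongs to the support of $\mathcal{G}_0$ or of $\mathcal{G}_1$ must make $\Omega(m)$ queries to the graph.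
   Context: The fractional independent-set LP of $H$ is: maximize $\sum_{a\in V(H)}y_a$ subject to $y_a+y_b\le1$ for all $(a,b)\in E(H)$ and $y\ge 0$; such a tight edge $f^*$ always exists for an optimal $y^*$. Queries to an edge-colored graph: degree queries, neighbor queries (return the $i$-th neighbor of $v$), pair queries (return whether $\{u,v\}$ is an edge), and edge-sample queries (return a uniformly random edge); whenever an edge is revealed by a query, its color is revealed too. *)

theory Defs
  imports "HOL-Probability.Probability"
begin

definition lp_feasible :: "nat \<Rightarrow> (nat \<times> nat) set \<Rightarrow> (nat \<Rightarrow> real) \<Rightarrow> bool" where
  "lp_feasible k EH y \<longleftrightarrow> (\<forall>a<k. y a \<ge> 0) \<and> (\<forall>(a,b)\<in>EH. y a + y b \<le> 1)"

definition lp_optimal :: "nat \<Rightarrow> (nat \<times> nat) set \<Rightarrow> (nat \<Rightarrow> real) \<Rightarrow> bool" where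
  "lp_optimal k EH y \<longleftrightarrow> lp_feasible k EH y \<and>
     (\<forall>y'. lp_feasible k EH y' \<longrightarrow> (\<Sum>a<k. y' a) \<le> (\<Sum>a<k. y a))"

datatype 'v query = Deg 'v | Nbr 'v nat | PairQ 'v 'v | Sample

datatype 'v answer =
    ADeg nat
  | ANbr "('v \<times> nat) option"        \<comment> \<open>i-th neighbour and colour of that edge, if it exists\<close>
  | APair "nat option"                \<comment> \<open>colour of the edge if it is an edge\<close>
  | ASample "'v set" nat              \<comment> \<open>uniformly random edge and its colour\<close>

definition edges_of :: "('v \<Rightarrow> 'v \<Rightarrow> bool) \<Rightarrow> 'v set set" where
  "edges_of E = {{u, v} | u v. E u v}"

definition valid_adj :: "('v \<Rightarrow> 'v \<Rightarrow> bool) \<Rightarrow> ('v \<Rightarrow> 'v list) \<Rightarrow> bool" where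
  "valid_adj E adj \<longleftrightarrow> (\<forall>v. distinct (adj v) \<and> set (adj v) = {u. E v u})"

fun oracle_answer :: "('v \<Rightarrow> 'v \<Rightarrow> bool) \<Rightarrow> ('v \<Rightarrow> 'v list) \<Rightarrow> ('v set \<Rightarrow> nat) \<Rightarrow> 'v query \<Rightarrow> 'v answer pmf" where
  "oracle_answer E adj col (Deg v) = return_pmf (ADeg (length (adj v)))"
| "oracle_answer E adj col (Nbr v i) = return_pmf (ANbr
      (if i < length (adj v) then Some (adj v ! i, col {v, adj v ! i}) else None))"
| "oracle_answer E adj col (PairQ u v) = return_pmf (APair (if E u v then Some (col {u, v}) else None))"
| "oracle_answer E adj col Sample = map_pmf (\<lambda>e. ASample e (col e)) (pmf_of_set (edges_of E))"

text \<open>A randomized adaptive algorithm: random seed r, next query chosen as a function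
  of the seed and the transcript so far. run produces the transcript of q queries.\<close>
fun run :: "('v \<Rightarrow> 'v \<Rightarrow> bool) \<Rightarrow> ('v \<Rightarrow> 'v list) \<Rightarrow> ('v set \<Rightarrow> nat)
      \<Rightarrow> ('r \<Rightarrow> 'v answer list \<Rightarrow> 'v query) \<Rightarrow> 'r \<Rightarrow> nat \<Rightarrow> 'v answer list pmf" where
  "run E adj col step r 0 = return_pmf []"
| "run E adj col step r (Suc t) =
     bind_pmf (run E adj col step r t) (\<lambda>tr.
     map_pmf (\<lambda>a. tr @ [a]) (oracle_answer E adj col (step r tr)))"

text \<open>Vertices of G0 are pairs (l, x) with l < k and x < n l; V_l = {(l,x). x < n l}.\<close>
definition G0_adj :: "(nat \<times> nat) set \<Rightarrow> (nat \<Rightarrow> nat) \<Rightarrow> (nat \<times> nat) \<Rightarrow> (nat \<times> nat) \<Rightarrow> bool" where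
  "G0_adj EH n u v \<longleftrightarrow> (fst u, fst v) \<in> EH \<and> snd u < n (fst u) \<and> snd v < n (fst v)"

definition part :: "(nat \<Rightarrow> nat) \<Rightarrow> nat \<Rightarrow> (nat \<times> nat) set" where
  "part n l = {(l, x) | x. x < n l}"

text \<open>Colour-1 edge e* uniform among edges between V_i and V_j.\<close>
definition special_edges :: "(nat \<Rightarrow> nat) \<Rightarrow> nat \<Rightarrow> nat \<Rightarrow> (nat \<times> nat) set set" where
  "special_edges n i j = {{u, v} | u v. u \<in> part n i \<and> v \<in> part n j}"

definition colouring_dist :: "(nat \<Rightarrow> nat) \<Rightarrow> nat \<Rightarrow> nat \<Rightarrow> bool \<Rightarrow> ((nat \<times> nat) set \<Rightarrow> nat) pmf" where
  "colouring_dist n i j b =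
     (if b then map_pmf (\<lambda>es e. if e = es then 1 else 0) (pmf_of_set (special_edges n i j))
      else return_pmf (\<lambda>e. 0))"

text \<open>Probability that the algorithm (seed distribution R, query rule step, output rule out,
  q queries; output True means "G is in the support of G_1") answers correctly when
  G is drawn from 1/2 G_0 + 1/2 G_1.\<close>
definition success_prob ::
  "(nat \<times> nat) set \<Rightarrow> (nat \<Rightarrow> nat) \<Rightarrow> nat \<Rightarrow> nat \<Rightarrow> ((nat \<times> nat) \<Rightarrow> (nat \<times> nat) list)
   \<Rightarrow> nat pmf \<Rightarrow> (nat \<Rightarrow> (nat \<times> nat) answer list \<Rightarrow> (nat \<times> nat) query)
   \<Rightarrow> (nat \<Rightarrow> (nat \<times> nat) answer list \<Rightarrow> bool) \<Rightarrow> nat \<Rightarrow> real" where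
  "success_prob EH n i j adj R step out q =
     pmf (bind_pmf (bernoulli_pmf (1/2)) (\<lambda>b.
          bind_pmf (colouring_dist n i j b) (\<lambda>col.
          bind_pmf R (\<lambda>r.
          map_pmf (\<lambda>tr. out r tr = b) (run (G0_adj EH n) adj col step r q))))) True"

end

theory Submission imports Defs begin

fun revq :: "('v \<Rightarrow> 'v list) \<Rightarrow> 'v query \<Rightarrow> 'v answer \<Rightarrow> 'v set option" where
  "revq adj (Deg v) a = None"
| "revq adj (Nbr v i) a = Some {v, adj v ! i}"
| "revq adj (PairQ u v) a = Some {u, v}"
| "revq adj Sample a = (case a of ASample e c \<Rightarrow> Some e | _ \<Rightarrow> None)"

definition revs :: "('v \<Rightarrow> 'v list) \<Rightarrow> ('r \<Rightarrow> 'v answer list \<Rightarrow> 'v query) \<Rightarrow> 'r \<Rightarrow> 'v answer list \<Rightarrow> 'v set set" where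
  "revs adj step r tr = {e. \<exists>p<length tr. revq adj (step r (take p tr)) (tr ! p) = Some e}"

lemma revs_snoc: "revs adj step r (tr @ [a]) = revs adj step r tr \<union> {e. revq adj (step r tr) a = Some e}"
proof -
  have "(\<exists>p<length (tr @ [a]). P p) \<longleftrightarrow> (\<exists>p<length tr. P p) \<or> P (length tr)" for P :: "nat \<Rightarrow> bool"
    by (auto simp: less_Suc_eq)
  then show ?thesis
    unfolding revs_def by (auto simp: nth_append)
qed

lemma card_revs: "card (revs adj step r tr) \<le> length tr"
proof -
  have "revs adj step r tr \<subseteq> (\<lambda>p. the (revq adj (step r (take p tr)) (tr ! p))) ` {..<length tr}"
    unfolding revs_def by force
  then show ?thesis
    by (metis (no_types, lifting) card_image_le card_lessThan card_mono dual_order.trans finite_imageI finite_lessThan)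
qed

lemma finite_revs: "finite (revs adj step r tr)"
proof -
  have "revs adj step r tr \<subseteq> (\<lambda>p. the (revq adj (step r (take p tr)) (tr ! p))) ` {..<length tr}"
    unfolding revs_def by force
  then show ?thesis by (rule finite_subset) auto
qed

lemma oracle_eq:
  assumes "\<And>x. x \<noteq> e \<Longrightarrow> col1 x = col2 x"
    and "revq adj Q a \<noteq> Some e"
  shows "pmf (oracle_answer E adj col1 Q) a = pmf (oracle_answer E adj col2 Q) a"
proof (cases Q)
  case Sample
  have "(\<lambda>x. ASample x (col1 x)) -` {a} = (\<lambda>x. ASample x (col2 x)) -` {a}"
  proof (cases a)
    case (ASample e' c)
    then have "col1 e' = col2 e'" using assms Sample by auto
    then show ?thesis using ASample by (auto simp: vimage_def)
  qed auto
  then show ?thesis using Sample by (simp add: pmf_map)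
qed (use assms in \<open>auto\<close>)

lemma pmf_run_Suc:
  "pmf (run E adj col step r (Suc t)) x =
     (if x = [] then 0 else pmf (run E adj col step r t) (butlast x) *
        pmf (oracle_answer E adj col (step r (butlast x))) (last x))"
proof -
  have "pmf (run E adj col step r (Suc t)) x =
     (\<integral>y. pmf (map_pmf (\<lambda>a. y @ [a]) (oracle_answer E adj col (step r y))) x \<partial>measure_pmf (run E adj col step r t))"
    by (simp add: pmf_bind)
  also have "\<dots> = (\<integral>y. indicator {butlast x} y * (if x = [] then 0 else
        pmf (oracle_answer E adj col (step r (butlast x))) (last x)) \<partial>measure_pmf (run E adj col step r t))"
  proof (rule Bochner_Integration.integral_cong[OF refl])
    fix y
    show "pmf (map_pmf (\<lambda>a. y @ [a]) (oracle_answer E adj col (step r y))) x =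
       indicator {butlast x} y * (if x = [] then 0 else pmf (oracle_answer E adj col (step r (butlast x))) (last x))"
    proof (cases "x \<noteq> [] \<and> y = butlast x")
      case True
      then have "x = y @ [last x]" by simp
      then have "pmf (map_pmf (\<lambda>a. y @ [a]) (oracle_answer E adj col (step r y))) x
           = pmf (oracle_answer E adj col (step r y)) (last x)"
        by (metis (no_types, lifting) inj_def pmf_map_inj' same_append_eq list.inject)
      then show ?thesis using True by simp
    next
      case False
      then have "x \<notin> (\<lambda>a. y @ [a]) ` set_pmf (oracle_answer E adj col (step r y))" by auto
      then show ?thesis using False by (auto simp: pmf_map_outside)
    qed
  qed
  also have "\<dots> = (if x = [] then 0 else pmf (run E adj col step r t) (butlast x) *
        pmf (oracle_answer E adj col (step r (butlast x))) (last x))"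
    by (simp add: measure_pmf_single)
  finally show ?thesis .
qed

lemma run_eq:
  assumes "\<And>x. x \<noteq> e \<Longrightarrow> col1 x = col2 x"
  shows "e \<notin> revs adj step r tr \<Longrightarrow> pmf (run E adj col1 step r t) tr = pmf (run E adj col2 step r t) tr"
proof (induction t arbitrary: tr)
  case 0
  then show ?case by simp
next
  case (Suc t)
  show ?case
  proof (cases "tr = []")
    case False
    then have tr: "tr = butlast tr @ [last tr]" by simp
    have "e \<notin> revs adj step r (butlast tr)" "revq adj (step r (butlast tr)) (last tr) \<noteq> Some e"
      using Suc.prems revs_snoc[of adj step r "butlast tr" "last tr"] tr by auto
    have 1: "pmf (run E adj col1 step r t) (butlast tr) = pmf (run E adj col2 step r t) (butlast tr)"
      using Suc.IH \<open>e \<notin> revs adj step r (butlast tr)\<close> by blast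
    have 2: "pmf (oracle_answer E adj col1 (step r (butlast tr))) (last tr)
          = pmf (oracle_answer E adj col2 (step r (butlast tr))) (last tr)"
      by (rule oracle_eq[of e col1 col2]) (use assms \<open>revq adj (step r (butlast tr)) (last tr) \<noteq> Some e\<close> in auto)
    show ?thesis by (simp only: pmf_run_Suc 1 2)
  qed (simp only: pmf_run_Suc if_True simp_thms)
qed

lemma run_length: "tr \<in> set_pmf (run E adj col step r t) \<Longrightarrow> length tr = t"
proof (induction t arbitrary: tr)
  case (Suc t)
  then show ?case by (auto simp del: run.simps simp: run.simps(2))
qed simp

lemma measure_shift:
  assumes "\<And>x. x \<notin> B \<Longrightarrow> pmf p x = pmf p' x"
  shows "measure p A \<le> measure p' A + measure p' B"
proof -
  have e1: "measure p (A - B) = measure p' (A - B)"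
    unfolding measure_pmf_conv_infsetsum by (rule infsetsum_cong) (use assms in auto)
  have e2: "measure p (UNIV - B) = measure p' (UNIV - B)"
    unfolding measure_pmf_conv_infsetsum by (rule infsetsum_cong) (use assms in auto)
  have c1: "measure p (UNIV - B) = 1 - measure p B"
    using measure_pmf.prob_compl[of B p] by simp
  have c2: "measure p' (UNIV - B) = 1 - measure p' B"
    using measure_pmf.prob_compl[of B p'] by simp
  have "measure p A \<le> measure p ((A - B) \<union> B)"
    by (rule measure_pmf.finite_measure_mono) auto
  also have "\<dots> \<le> measure p (A - B) + measure p B"
    by (subst measure_pmf.finite_measure_Union) auto
  finally have s1: "measure p A \<le> measure p (A - B) + measure p B" .
  have s2: "measure p' (A - B) \<le> measure p' A"
    by (rule measure_pmf.finite_measure_mono) auto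
  from s1 s2 show ?thesis using e1 e2 c1 c2 by linarith
qed

lemma int_bnd:
  fixes f :: "'a \<Rightarrow> real"
  assumes "\<And>x. \<bar>f x\<bar> \<le> B"
  shows "integrable (measure_pmf M) f"
  by (rule measure_pmf.integrable_const_bound[where B=B]) (use assms in auto)

lemma sum_revs:
  assumes "finite S" "\<And>tr. tr \<in> set_pmf p \<Longrightarrow> card (revs adj step r tr) \<le> q"
  shows "(\<Sum>e\<in>S. measure (measure_pmf p) {tr. e \<in> revs adj step r tr}) \<le> real q"
proof -
  have "(\<Sum>e\<in>S. measure (measure_pmf p) {tr. e \<in> revs adj step r tr})
      = (\<Sum>e\<in>S. \<integral>tr. indicator {tr. e \<in> revs adj step r tr} tr \<partial>measure_pmf p)"
  proof -
    have ind: "integral\<^sup>L (measure_pmf p) (indicator X :: _ \<Rightarrow> real) = measure (measure_pmf p) X" for X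
      using Bochner_Integration.integral_indicator[of "measure_pmf p" X] by (simp only: space_measure_pmf Int_UNIV_right)
    show ?thesis by (simp only: ind)
  qed
  also have "\<dots> = (\<integral>tr. (\<Sum>e\<in>S. indicator {tr. e \<in> revs adj step r tr} tr) \<partial>measure_pmf p)"
  proof -
    have "integrable (measure_pmf p) (indicator {tr. e \<in> revs adj step r tr} :: _ \<Rightarrow> real)" for e
      by (rule int_bnd[where B=1]) (simp add: indicator_def)
    then show ?thesis
      using Bochner_Integration.integral_sum[where I=S and f="\<lambda>e. indicator {tr. e \<in> revs adj step r tr} :: _ \<Rightarrow> real" and M="measure_pmf p"]
      by simp
  qed
  also have "\<dots> \<le> (\<integral>tr. real q \<partial>measure_pmf p)"
  proof (rule integral_mono_AE)
    show "integrable (measure_pmf p) (\<lambda>tr. \<Sum>e\<in>S. indicator {tr. e \<in> revs adj step r tr} tr :: real)"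
    proof (rule int_bnd[where B="real (card S)"])
      fix x
      have "0 \<le> (\<Sum>e\<in>S. indicator {tr. e \<in> revs adj step r tr} x :: real)" by (simp add: sum_nonneg)
      moreover have "(\<Sum>e\<in>S. indicator {tr. e \<in> revs adj step r tr} x :: real) \<le> of_nat (card S) * 1"
        by (rule sum_bounded_above) (simp add: indicator_def)
      ultimately show "\<bar>\<Sum>e\<in>S. indicator {tr. e \<in> revs adj step r tr} x :: real\<bar> \<le> real (card S)" by simp
    qed
    show "AE tr in measure_pmf p. (\<Sum>e\<in>S. indicator {tr. e \<in> revs adj step r tr} tr) \<le> real q"
    proof (rule AE_pmfI)
      fix tr assume tr: "tr \<in> set_pmf p"
      have "(\<Sum>e\<in>S. indicator {tr. e \<in> revs adj step r tr} tr :: real) = (\<Sum>e\<in>S. indicator (revs adj step r tr) e)"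
        by (simp add: indicator_def)
      also have "\<dots> = real (card (S \<inter> revs adj step r tr))"
      proof -
        have "(\<Sum>e\<in>S. indicator (revs adj step r tr) e :: real) = (\<Sum>e\<in>S \<inter> revs adj step r tr. 1)"
          using sum.inter_restrict[OF assms(1), of "\<lambda>_. 1::real" "revs adj step r tr"]
          by (simp add: indicator_def of_bool_def)
        then show ?thesis by simp
      qed
      also have "\<dots> \<le> real q"
      proof -
        have "card (S \<inter> revs adj step r tr) \<le> card (revs adj step r tr)"
          by (rule card_mono[OF finite_revs]) auto
        then show ?thesis using assms(2)[OF tr] by simp
      qed
      finally show "(\<Sum>e\<in>S. indicator {tr. e \<in> revs adj step r tr} tr) \<le> real q" .
    qed
  qed simp
  also have "\<dots> = real q" by simp
  finally show ?thesis .
qed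

lemma card_part: "card (part n l) = n l"
proof -
  have "part n l = (\<lambda>x. (l, x)) ` {..<n l}" unfolding part_def by auto
  moreover have "inj_on (\<lambda>x. (l, x)) {..<n l}" by (auto simp: inj_on_def)
  ultimately show ?thesis by (simp add: card_image)
qed

lemma card_special:
  assumes "i \<noteq> j"
  shows "card (special_edges n i j) = n i * n j"
proof -
  have eq: "special_edges n i j = (\<lambda>(u, v). {u, v}) ` (part n i \<times> part n j)"
    unfolding special_edges_def by auto
  have "inj_on (\<lambda>(u, v). {u, v}) (part n i \<times> part n j)"
  proof (rule inj_onI, clarify)
    fix a b c d
    assume h: "{a, b} = {c, d}" "a \<in> part n i" "b \<in> part n j" "c \<in> part n i" "d \<in> part n j"
    then have "fst a = i" "fst b = j" "fst c = i" "fst d = j" by (auto simp: part_def)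
    then show "a = c \<and> b = d" using h(1) assms by (metis doubleton_eq_iff)
  qed
  then show ?thesis using eq by (simp add: card_image card_cartesian_product card_part)
qed

theorem lemma5p5:
  fixes k :: nat and EH :: "(nat \<times> nat) set" and y :: "nat \<Rightarrow> real" and i j :: nat
  assumes "k \<ge> 2"
    and "EH \<subseteq> {..<k} \<times> {..<k}"
    and "sym EH"
    and "\<forall>a. (a, a) \<notin> EH"
    and "EH \<noteq> {}"
    and "lp_optimal k EH y"
    and "(i, j) \<in> EH"
    and "y i + y j = 1"
  shows "\<exists>c > (0::real). \<forall>(m::nat) (n::nat \<Rightarrow> nat) adj R step out (q::nat).
           m \<ge> 1 \<longrightarrow> (\<forall>l<k. real (n l) = real m powr y l) \<longrightarrow>
           valid_adj (G0_adj EH n) adj \<longrightarrow>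
           success_prob EH n i j adj R step out q \<ge> 2/3 \<longrightarrow>
           real q \<ge> c * real m"
proof -
  have ij: "i \<noteq> j" using assms(4,7) by auto
  have ik: "i < k" "j < k" using assms(2,7) by auto
  show ?thesis
  proof (intro exI[of _ "1/3::real"] conjI allI impI)
    show "(0::real) < 1/3" by simp
    fix m :: nat and n :: "nat \<Rightarrow> nat" and adj R step out and q :: nat
    assume m1: "1 \<le> m" and hn: "\<forall>l<k. real (n l) = real m powr y l"
      and va: "valid_adj (G0_adj EH n) adj" and succ: "2/3 \<le> success_prob EH n i j adj R step out q"
    define S where "S = special_edges n i j"
    have "real (n i * n j) = real m powr y i * real m powr y j" using hn ik by simp
    also have "\<dots> = real m" using m1 assms(8) by (simp add: powr_add[symmetric])
    finally have cardS: "card S = m" unfolding S_def using card_special[OF ij] by (metis of_nat_eq_iff)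
    have finS: "finite S" "S \<noteq> {}" using cardS m1 card_ge_0_finite[of S] by auto
    define Gr where "Gr = G0_adj EH n"
    define col0 :: "(nat \<times> nat) set \<Rightarrow> nat" where "col0 = (\<lambda>_. 0)"
    define ce :: "(nat \<times> nat) set \<Rightarrow> (nat \<times> nat) set \<Rightarrow> nat" where "ce = (\<lambda>es e. if e = es then 1 else 0)"
    define A where "A r = measure (measure_pmf (run Gr adj col0 step r q)) {tr. out r tr}" for r
    define B where "B r = measure (measure_pmf (run Gr adj col0 step r q)) {tr. \<not> out r tr}" for r
    define D where "D es r = measure (measure_pmf (run Gr adj col0 step r q)) {tr. es \<in> revs adj step r tr}" for es r
    define F where "F es r = measure (measure_pmf (run Gr adj (ce es) step r q)) {tr. out r tr}" for es r
    have AB: "B r = 1 - A r" for r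
    proof -
      have "{tr. \<not> out r tr} = UNIV - {tr. out r tr}" by auto
      then show ?thesis unfolding A_def B_def using measure_pmf.prob_compl by simp
    qed
    have FD: "F es r \<le> A r + D es r" for es r
      unfolding F_def A_def D_def
    proof (rule measure_shift)
      fix x assume "x \<notin> {tr. es \<in> revs adj step r tr}"
      then show "pmf (run Gr adj (ce es) step r q) x = pmf (run Gr adj col0 step r q) x"
        by (intro run_eq[of es]) (auto simp: ce_def col0_def)
    qed
    have sumD: "(\<Sum>es\<in>S. D es r) \<le> real q" for r
      unfolding D_def
      by (rule sum_revs[OF finS(1)]) (metis card_revs run_length)
    have succ_eq: "success_prob EH n i j adj R step out q =
        1/2 * ((\<Sum>es\<in>S. \<integral>r. F es r \<partial>R) / card S) + 1/2 * (\<integral>r. B r \<partial>R)"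
    proof -
      define g where "g col b = bind_pmf R (\<lambda>r. map_pmf (\<lambda>tr. out r tr = b) (run Gr adj col step r q))" for col b
      have pg: "pmf (g col b) True = (\<integral>r. measure (measure_pmf (run Gr adj col step r q)) {tr. out r tr = b} \<partial>R)" for col b
        unfolding g_def by (simp add: pmf_bind pmf_map vimage_def)
      have ct: "colouring_dist n i j True = map_pmf ce (pmf_of_set S)"
        by (simp add: colouring_dist_def ce_def S_def)
      have cf: "colouring_dist n i j False = return_pmf col0"
        by (simp add: colouring_dist_def col0_def)
      have "success_prob EH n i j adj R step out q =
          pmf (bind_pmf (bernoulli_pmf (1/2)) (\<lambda>b. bind_pmf (colouring_dist n i j b) (\<lambda>col. g col b))) True"
        unfolding success_prob_def g_def Gr_def ..
      also have "\<dots> = pmf (bind_pmf (colouring_dist n i j True) (\<lambda>col. g col True)) True * (1/2)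
                      + pmf (bind_pmf (colouring_dist n i j False) (\<lambda>col. g col False)) True * (1 - 1/2)"
        by (simp only: pmf_bind integral_bernoulli_pmf)
      also have "pmf (bind_pmf (colouring_dist n i j True) (\<lambda>col. g col True)) True
          = (\<Sum>es\<in>S. \<integral>r. F es r \<partial>R) / card S"
        unfolding ct bind_map_pmf pmf_bind integral_pmf_of_set[OF finS(2) finS(1)] pg F_def
        by simp
      also have "pmf (bind_pmf (colouring_dist n i j False) (\<lambda>col. g col False)) True = (\<integral>r. B r \<partial>R)"
        unfolding cf bind_return_pmf pg B_def by simp
      finally show ?thesis by simp
    qed
    have iF: "integrable (measure_pmf R) (F es)" for es
      by (rule int_bnd[where B=1]) (simp add: F_def)
    have iA: "integrable (measure_pmf R) A"
      by (rule int_bnd[where B=1]) (simp add: A_def)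
    have iD: "integrable (measure_pmf R) (D es)" for es
      by (rule int_bnd[where B=1]) (simp add: D_def)
    have "(\<Sum>es\<in>S. \<integral>r. F es r \<partial>R) \<le> (\<Sum>es\<in>S. \<integral>r. A r + D es r \<partial>R)"
      by (intro sum_mono integral_mono iF Bochner_Integration.integrable_add iA iD FD)
    also have "\<dots> = (\<Sum>es\<in>S. (\<integral>r. A r \<partial>R) + (\<integral>r. D es r \<partial>R))"
      using iA iD by simp
    also have "\<dots> = real (card S) * (\<integral>r. A r \<partial>R) + (\<integral>r. (\<Sum>es\<in>S. D es r) \<partial>R)"
      using iD by (simp add: sum.distrib Bochner_Integration.integral_sum)
    also have "(\<integral>r. (\<Sum>es\<in>S. D es r) \<partial>R) \<le> (\<integral>r. real q \<partial>R)"
      by (intro integral_mono sumD Bochner_Integration.integrable_sum iD) simp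
    finally have "(\<Sum>es\<in>S. \<integral>r. F es r \<partial>R) \<le> real m * (\<integral>r. A r \<partial>R) + real q"
      using cardS by simp
    then have "(\<Sum>es\<in>S. \<integral>r. F es r \<partial>R) / card S \<le> (\<integral>r. A r \<partial>R) + real q / real m"
      using cardS m1 by (simp add: divide_simps algebra_simps)
    moreover have "(\<integral>r. B r \<partial>R) = 1 - (\<integral>r. A r \<partial>R)"
      using iA by (simp add: AB)
    ultimately have "success_prob EH n i j adj R step out q \<le> 1/2 + real q / (2 * real m)"
      unfolding succ_eq by linarith
    with succ have "2/3 \<le> 1/2 + real q / (2 * real m)" by linarith
    then show "1/3 * real m \<le> real q" using m1 by (simp add: divide_simps)
  qed
qed

end
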